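(* Let $(\mathcal T,\{B_i\})$ be a tree decomposition of a graph $G$, rooted at $r$, with every node at level at most $d$, and let $\lambda\in\{1,\dots,d\}$. Define new bags $$B'_v := \bigcup\big\{B_w : w\in\mathcal T_{v\leftrightarrow r},\ w\in \mathcal T_{v\leftrightarrow\sigma(v)} \text{ or } w \text{ is a synchronization node}\big\}$$ for $v\neq r$, and $B'_r := B_r$. Then $(\mathcal T,\{B'_v\})$ has combinatorial diameter at most $3$.
   Context: Tree decomposition: tree with bags covering vertices and edges of $G$, each vertex's bags forming a connected subtree. $\mathcal T_{x\leftrightarrow y}$ is the set of nodes on the unique $x$–$y$ path in $\mathcal T$. The level of a node $v$ is the number of edges on $\mathcal T_{v\leftrightarrow r}$. A node is a synchronization node if its level is a multiple of $\lambda$. For $v\neq r$, $\sigma(v)$ is the first synchronization node on the path from $v$ to $r$, excluding $v$. Combinatorial diameter: for nodes $s,t$ consider the path $\mathcal T_{s\leftrightarrow t}$. A non-endpoint node $v$ of the current path, with its two neighbours on the current path labelled $u,w$ (in some order), is redundant if $B_v\cap B_w\subseteq B_u$; bypassing $v$ deletes $v$ and joins $u,w$. The path has combinatorial length at most $\ell$ if repeatedly bypassing redundant nodes (redundancy evaluated in the current path) yields a path with at most $\ell$ edges. The combinatorial diameter is the minimum $\delta$ such that every path $\mathcal T_{u\leftrightarrow v}$ has combinatorial length at most $\delta$ (with respect to the given bags). *)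

theory Defs
  imports Main
begin

definition is_walk :: "('n \<Rightarrow> 'n \<Rightarrow> bool) \<Rightarrow> 'n set \<Rightarrow> 'n list \<Rightarrow> bool" where
  "is_walk E S xs \<longleftrightarrow> xs \<noteq> [] \<and> set xs \<subseteq> S \<and>
     (\<forall>i. Suc i < length xs \<longrightarrow> E (xs ! i) (xs ! Suc i))"

definition is_path :: "('n \<Rightarrow> 'n \<Rightarrow> bool) \<Rightarrow> 'n set \<Rightarrow> 'n \<Rightarrow> 'n \<Rightarrow> 'n list \<Rightarrow> bool" where
  "is_path E N u v xs \<longleftrightarrow> is_walk E N xs \<and> distinct xs \<and> hd xs = u \<and> last xs = v"

definition connected_in :: "('n \<Rightarrow> 'n \<Rightarrow> bool) \<Rightarrow> 'n set \<Rightarrow> bool" where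
  "connected_in E S \<longleftrightarrow> (\<forall>u\<in>S. \<forall>v\<in>S. \<exists>xs. is_walk E S xs \<and> hd xs = u \<and> last xs = v)"

definition acyclic_graph :: "('n \<Rightarrow> 'n \<Rightarrow> bool) \<Rightarrow> 'n set \<Rightarrow> bool" where
  "acyclic_graph E N \<longleftrightarrow> \<not> (\<exists>xs. is_walk E N xs \<and> distinct xs \<and> length xs \<ge> 3 \<and> E (last xs) (hd xs))"

definition is_tree :: "'n set \<Rightarrow> ('n \<Rightarrow> 'n \<Rightarrow> bool) \<Rightarrow> bool" where
  "is_tree N E \<longleftrightarrow> finite N \<and> N \<noteq> {} \<and>
     (\<forall>u v. E u v \<longrightarrow> u \<in> N \<and> v \<in> N) \<and> (\<forall>u v. E u v \<longrightarrow> E v u) \<and> (\<forall>u. \<not> E u u) \<and>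
     connected_in E N \<and> acyclic_graph E N"

definition tpath :: "'n set \<Rightarrow> ('n \<Rightarrow> 'n \<Rightarrow> bool) \<Rightarrow> 'n \<Rightarrow> 'n \<Rightarrow> 'n list" where
  "tpath N E u v = (THE xs. is_path E N u v xs)"

definition is_tree_decomposition ::
  "'v set \<Rightarrow> ('v \<Rightarrow> 'v \<Rightarrow> bool) \<Rightarrow> 'n set \<Rightarrow> ('n \<Rightarrow> 'n \<Rightarrow> bool) \<Rightarrow> ('n \<Rightarrow> 'v set) \<Rightarrow> bool" where
  "is_tree_decomposition VG EG N E B \<longleftrightarrow>
     is_tree N E \<and> (\<forall>i\<in>N. B i \<subseteq> VG) \<and>
     (\<forall>x\<in>VG. \<exists>i\<in>N. x \<in> B i) \<and>
     (\<forall>x y. EG x y \<longrightarrow> (\<exists>i\<in>N. x \<in> B i \<and> y \<in> B i)) \<and>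
     (\<forall>x\<in>VG. connected_in E {i\<in>N. x \<in> B i})"

definition level :: "'n set \<Rightarrow> ('n \<Rightarrow> 'n \<Rightarrow> bool) \<Rightarrow> 'n \<Rightarrow> 'n \<Rightarrow> nat" where
  "level N E r v = length (tpath N E v r) - 1"

definition sync_node :: "'n set \<Rightarrow> ('n \<Rightarrow> 'n \<Rightarrow> bool) \<Rightarrow> 'n \<Rightarrow> nat \<Rightarrow> 'n \<Rightarrow> bool" where
  "sync_node N E r lam v \<longleftrightarrow> lam dvd level N E r v"

definition sigma :: "'n set \<Rightarrow> ('n \<Rightarrow> 'n \<Rightarrow> bool) \<Rightarrow> 'n \<Rightarrow> nat \<Rightarrow> 'n \<Rightarrow> 'n" where
  "sigma N E r lam v = hd (filter (sync_node N E r lam) (tl (tpath N E v r)))"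

definition new_bags :: "'n set \<Rightarrow> ('n \<Rightarrow> 'n \<Rightarrow> bool) \<Rightarrow> 'n \<Rightarrow> nat \<Rightarrow> ('n \<Rightarrow> 'v set) \<Rightarrow> 'n \<Rightarrow> 'v set" where
  "new_bags N E r lam B v =
     (if v = r then B r
      else \<Union> {B w | w. w \<in> set (tpath N E v r) \<and>
                 (w \<in> set (tpath N E v (sigma N E r lam v)) \<or> sync_node N E r lam w)})"

definition bypass_step :: "('n \<Rightarrow> 'v set) \<Rightarrow> 'n list \<Rightarrow> 'n list \<Rightarrow> bool" where
  "bypass_step B xs ys \<longleftrightarrow> (\<exists>i. 0 < i \<and> Suc i < length xs \<and>
     (B (xs ! i) \<inter> B (xs ! Suc i) \<subseteq> B (xs ! (i - 1)) \<or>
      B (xs ! i) \<inter> B (xs ! (i - 1)) \<subseteq> B (xs ! Suc i)) \<and>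
     ys = take i xs @ drop (Suc i) xs)"

definition comb_length_le :: "('n \<Rightarrow> 'v set) \<Rightarrow> 'n list \<Rightarrow> nat \<Rightarrow> bool" where
  "comb_length_le B xs l \<longleftrightarrow> (\<exists>ys. (bypass_step B)\<^sup>*\<^sup>* xs ys \<and> length ys - 1 \<le> l)"

definition comb_diameter_le :: "'n set \<Rightarrow> ('n \<Rightarrow> 'n \<Rightarrow> bool) \<Rightarrow> ('n \<Rightarrow> 'v set) \<Rightarrow> nat \<Rightarrow> bool" where
  "comb_diameter_le N E B delta \<longleftrightarrow> (\<forall>u\<in>N. \<forall>v\<in>N. comb_length_le B (tpath N E u v) delta)"

end

theory Submission
  imports Defs
begin


lemma walk_single[simp]: "is_walk E S [x] \<longleftrightarrow> x \<in> S"
  by (auto simp: is_walk_def)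

lemma walk_Cons2[simp]: "is_walk E S (x # y # xs) \<longleftrightarrow> x \<in> S \<and> E x y \<and> is_walk E S (y # xs)"
proof
  assume h: "is_walk E S (x # y # xs)"
  then have "E x y" unfolding is_walk_def by (metis One_nat_def length_Cons less_Suc_eq_0_disj nth_Cons_0 nth_Cons_Suc zero_less_Suc)
  moreover have "is_walk E S (y # xs)" using h unfolding is_walk_def
    by (metis (no_types, lifting) Suc_less_eq length_Cons nth_Cons_Suc set_subset_Cons subset_trans list.distinct(1))
  ultimately show "x \<in> S \<and> E x y \<and> is_walk E S (y # xs)" using h by (auto simp: is_walk_def)
next
  assume h: "x \<in> S \<and> E x y \<and> is_walk E S (y # xs)"
  show "is_walk E S (x # y # xs)" unfolding is_walk_def
  proof (intro conjI allI impI)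
    show "set (x # y # xs) \<subseteq> S" using h by (auto simp: is_walk_def)
  next
    fix i assume "Suc i < length (x # y # xs)"
    then show "E ((x # y # xs) ! i) ((x # y # xs) ! Suc i)" using h
      by (cases i) (auto simp: is_walk_def)
  qed simp
qed

lemma walk_nonempty: "is_walk E S xs \<Longrightarrow> xs \<noteq> []" by (simp add: is_walk_def)

lemma walk_set: "is_walk E S xs \<Longrightarrow> set xs \<subseteq> S" by (simp add: is_walk_def)

lemma walk_mono: "is_walk E S xs \<Longrightarrow> S \<subseteq> S' \<Longrightarrow> is_walk E S' xs"
  by (auto simp: is_walk_def)

lemma walk_Cons: "is_walk E S (x # xs) \<longleftrightarrow> x \<in> S \<and> (xs = [] \<or> (E x (hd xs) \<and> is_walk E S xs))"
  by (cases xs) auto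

lemma walk_append:
  "xs \<noteq> [] \<Longrightarrow> ys \<noteq> [] \<Longrightarrow>
   is_walk E S (xs @ ys) \<longleftrightarrow> is_walk E S xs \<and> is_walk E S ys \<and> E (last xs) (hd ys)"
proof (induction xs)
  case Nil then show ?case by simp
next
  case (Cons x xs)
  show ?case
  proof (cases "xs = []")
    case True
    then show ?thesis using Cons by (cases ys) auto
  next
    case False
    then show ?thesis using Cons by (cases xs) auto
  qed
qed

lemma walk_rev: "(\<And>u v. E u v \<Longrightarrow> E v u) \<Longrightarrow> is_walk E S xs \<Longrightarrow> is_walk E S (rev xs)"
proof (induction xs)
  case Nil then show ?case by (simp add: is_walk_def)
next
  case (Cons x xs)
  show ?case
  proof (cases "xs = []")
    case True then show ?thesis using Cons by simp
  next
    case False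
    have "is_walk E S (rev xs @ [x])"
      using Cons False by (subst walk_append) (auto simp: walk_Cons last_rev)
    then show ?thesis by simp
  qed
qed

lemma walk_glue:
  assumes "is_walk E S xs" "is_walk E S ys" "last xs = hd ys"
  shows "is_walk E S (xs @ tl ys)" "hd (xs @ tl ys) = hd xs" "last (xs @ tl ys) = last ys"
proof -
  have ne: "xs \<noteq> []" "ys \<noteq> []" using assms by (auto simp: is_walk_def)
  then obtain y ys' where ys: "ys = y # ys'" by (cases ys) auto
  show "is_walk E S (xs @ tl ys)"
  proof (cases "ys' = []")
    case True then show ?thesis using assms ys by simp
  next
    case False
    then show ?thesis using assms ys ne by (subst walk_append) (auto simp: walk_Cons)
  qed
  show "hd (xs @ tl ys) = hd xs" using ne by simp
  show "last (xs @ tl ys) = last ys" using ne ys assms(3) by (cases "ys' = []") auto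
qed

lemma walk_drop: "is_walk E S xs \<Longrightarrow> i < length xs \<Longrightarrow> is_walk E S (drop i xs)"
  unfolding is_walk_def by (auto dest: in_set_dropD)

lemma walk_to_path:
  "is_walk E S xs \<Longrightarrow> \<exists>ys. is_walk E S ys \<and> distinct ys \<and> hd ys = hd xs \<and> last ys = last xs \<and> set ys \<subseteq> set xs"
proof (induction "length xs" arbitrary: xs rule: less_induct)
  case less
  show ?case
  proof (cases "distinct xs")
    case True then show ?thesis using less by blast
  next
    case False
    then obtain as y bs cs where xs: "xs = as @ [y] @ bs @ [y] @ cs"
      using not_distinct_decomp by blast
    define zs where "zs = as @ [y] @ cs"
    have w1: "is_walk E S (as @ [y])"
    proof -
      have "is_walk E S ((as @ [y]) @ (bs @ [y] @ cs))" using less xs by simp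
      then show ?thesis by (subst (asm) walk_append) auto
    qed
    have w2: "is_walk E S ([y] @ cs)"
    proof -
      have "is_walk E S ((as @ [y] @ bs) @ ([y] @ cs))" using less xs by simp
      then show ?thesis by (subst (asm) walk_append) auto
    qed
    have wz: "is_walk E S zs" unfolding zs_def
      using walk_glue(1)[OF w1 w2] by simp
    have "length zs < length xs" using xs zs_def by simp
    then obtain ys where "is_walk E S ys \<and> distinct ys \<and> hd ys = hd zs \<and> last ys = last zs \<and> set ys \<subseteq> set zs"
      using less wz by blast
    moreover have "hd zs = hd xs" "last zs = last xs" "set zs \<subseteq> set xs"
      using xs zs_def by (cases as; cases cs; auto)+
    ultimately show ?thesis by auto
  qed
qed


lemma distinct_hd_last: "distinct ys \<Longrightarrow> ys \<noteq> [] \<Longrightarrow> hd ys = last ys \<Longrightarrow> ys = [hd ys]"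
  by (cases ys) (auto split: if_splits)

locale tr =
  fixes N :: "'n set" and E :: "'n \<Rightarrow> 'n \<Rightarrow> bool"
  assumes tree: "is_tree N E"
begin

lemma symE: "E u v \<Longrightarrow> E v u" using tree by (auto simp: is_tree_def)
lemma irrE: "\<not> E u u" using tree by (auto simp: is_tree_def)
lemma acyc: "acyclic_graph E N" using tree by (auto simp: is_tree_def)
lemma conn: "connected_in E N" using tree by (auto simp: is_tree_def)

lemma path_unique: "is_path E N u v xs \<Longrightarrow> is_path E N u v ys \<Longrightarrow> xs = ys"
proof (induction xs arbitrary: u ys)
  case Nil then show ?case by (simp add: is_path_def is_walk_def)
next
  case (Cons x xs)
  have xu: "x = u" using Cons.prems by (simp add: is_path_def)
  show ?case
  proof (cases "xs = []")
    case True
    then have "v = u" using Cons.prems xu by (simp add: is_path_def)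
    then have "hd ys = last ys" "ys \<noteq> []" "distinct ys" using Cons.prems by (auto simp: is_path_def is_walk_def)
    then have "ys = [hd ys]" using distinct_hd_last by blast
    then show ?thesis using True xu Cons.prems by (simp add: is_path_def)
  next
    case False
    then obtain a xs' where xs: "xs = a # xs'" by (cases xs) auto
    have ysne: "ys \<noteq> []" using Cons.prems by (simp add: is_path_def is_walk_def)
    then obtain y ys' where ys: "ys = y # ys'" by (cases ys) auto
    have yu: "y = u" using Cons.prems ys by (simp add: is_path_def)
    have vin2: "v = last xs" using Cons.prems False by (auto simp: is_path_def)
    have vin: "v \<in> set xs" "v = last xs" using vin2 False by auto
    have "u \<notin> set xs" using Cons.prems xu by (simp add: is_path_def)
    then have "v \<noteq> u" using vin by auto
    then have "ys' \<noteq> []" using Cons.prems ys yu by (auto simp: is_path_def)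
    then obtain b ys'' where ys': "ys' = b # ys''" by (cases ys') auto
    show ?thesis
    proof (cases "a = b")
      case True
      have p1: "is_path E N a v xs" using Cons.prems xs False
        by (auto simp: is_path_def)
      have p2: "is_path E N a v ys'" using Cons.prems ys ys' True
        by (auto simp: is_path_def)
      show ?thesis using Cons.IH[OF p1 p2] xu yu ys by simp
    next
      case False
      let ?S = "N - {u}"
      have wx: "is_walk E ?S xs" using Cons.prems xu xs
        by (auto simp: is_path_def is_walk_def)
      have wy: "is_walk E ?S ys'" using Cons.prems yu ys ys'
        by (auto simp: is_path_def is_walk_def)
      have wyr: "is_walk E ?S (rev ys')" by (rule walk_rev[OF symE wy])
      have "last ys' = v" using Cons.prems ys ys' by (auto simp: is_path_def)
      then have lx: "last xs = hd (rev ys')" using vin ys' by (metis hd_rev list.distinct(1))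
      have wg: "is_walk E ?S (xs @ tl (rev ys'))" by (rule walk_glue(1)[OF wx wyr lx])
      have hg: "hd (xs @ tl (rev ys')) = a" using walk_glue(2)[OF wx wyr lx] xs by simp
      have lg: "last (xs @ tl (rev ys')) = b" using walk_glue(3)[OF wx wyr lx] ys' by (simp add: last_rev)
      obtain p where p: "is_walk E ?S p" "distinct p" "hd p = a" "last p = b"
        using walk_to_path[OF wg] hg lg by metis
      have pne: "p \<noteq> []" using p by (simp add: is_walk_def)
      have "length p \<ge> 2"
      proof (rule ccontr)
        assume "\<not> 2 \<le> length p"
        then have "length p = 1" using pne by (cases p) (auto simp: Suc_le_eq)
        then have "hd p = last p" by (cases p) auto
        then show False using p False by simp
      qed
      have uN: "u \<in> N" using Cons.prems xu by (auto simp: is_path_def is_walk_def)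
      have Eua: "E u a" using Cons.prems xu xs by (simp add: is_path_def)
      have Eub: "E u b" using Cons.prems yu ys ys' by (simp add: is_path_def)
      have "is_walk E N (u # p)" using p uN Eua pne walk_mono[OF p(1)]
        by (auto simp: walk_Cons)
      moreover have "distinct (u # p)" using p walk_set[OF p(1)] by auto
      moreover have "length (u # p) \<ge> 3" using \<open>length p \<ge> 2\<close> by simp
      moreover have "E (last (u # p)) (hd (u # p))" using p pne symE[OF Eub] by simp
      ultimately show ?thesis using acyc unfolding acyclic_graph_def by blast
    qed
  qed
qed

lemma path_exists: "u \<in> N \<Longrightarrow> v \<in> N \<Longrightarrow> \<exists>xs. is_path E N u v xs"
proof -
  assume "u \<in> N" "v \<in> N"
  then obtain xs where "is_walk E N xs" "hd xs = u" "last xs = v"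
    using conn unfolding connected_in_def by blast
  then show ?thesis using walk_to_path unfolding is_path_def by metis
qed

lemma tpath_is_path: "u \<in> N \<Longrightarrow> v \<in> N \<Longrightarrow> is_path E N u v (tpath N E u v)"
  unfolding tpath_def by (rule theI') (use path_exists path_unique in blast)

lemma tpath_eq: "is_path E N u v xs \<Longrightarrow> tpath N E u v = xs"
  unfolding tpath_def using path_unique by blast

end


locale rt = tr +
  fixes r assumes rN: "r \<in> N"
begin

declare upt_Suc[simp del]

lemma rev_upt_nth: "j < Suc a - b \<Longrightarrow> rev [b..<Suc a] ! j = a - j"
  by (simp add: rev_nth del: upt_Suc)

abbreviation P where "P v \<equiv> tpath N E v r"
abbreviation Lv where "Lv v \<equiv> level N E r v"
definition anc where "anc s k = P s ! (Lv s - k)"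

lemma P_path: "v \<in> N \<Longrightarrow> is_path E N v r (P v)"
  using tpath_is_path rN by blast

lemma P_ne: "v \<in> N \<Longrightarrow> P v \<noteq> []"
  using P_path by (auto simp: is_path_def is_walk_def)

lemma P_len: "v \<in> N \<Longrightarrow> length (P v) = Suc (Lv v)"
  using P_ne by (simp add: level_def)

lemma P_set: "v \<in> N \<Longrightarrow> set (P v) \<subseteq> N"
  using P_path by (auto simp: is_path_def is_walk_def)

lemma P_hd: "v \<in> N \<Longrightarrow> hd (P v) = v" using P_path by (auto simp: is_path_def)
lemma P_last: "v \<in> N \<Longrightarrow> last (P v) = r" using P_path by (auto simp: is_path_def)

lemma P_drop: assumes "v \<in> N" "i < length (P v)"
  shows "P (P v ! i) = drop i (P v)"
proof -
  have "is_path E N (P v ! i) r (drop i (P v))"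
    using P_path[OF assms(1)] assms(2)
    by (auto simp: is_path_def walk_drop hd_drop_conv_nth)
  then show ?thesis by (rule tpath_eq)
qed

lemma nthP_N: "v \<in> N \<Longrightarrow> i < length (P v) \<Longrightarrow> P v ! i \<in> N"
  using P_set nth_mem by blast

lemma anc_N: "s \<in> N \<Longrightarrow> k \<le> Lv s \<Longrightarrow> anc s k \<in> N"
  unfolding anc_def using nthP_N P_len by simp

lemma P_anc_drop: assumes "s \<in> N" "k \<le> Lv s"
  shows "P (anc s k) = drop (Lv s - k) (P s)"
proof -
  have "Lv s - k < length (P s)" using P_len[OF assms(1)] by simp
  then show ?thesis unfolding anc_def using P_drop[OF assms(1)] by blast
qed

lemma Lv_anc: assumes "s \<in> N" "k \<le> Lv s" shows "Lv (anc s k) = k"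
proof -
  have "length (P (anc s k)) = Suc (Lv s) - (Lv s - k)"
    using P_anc_drop[OF assms] P_len[OF assms(1)] by simp
  then have "length (P (anc s k)) = Suc k" using assms(2) by simp
  then show ?thesis unfolding level_def by simp
qed

lemma P_anc: assumes "s \<in> N" "m \<le> Lv s"
  shows "P (anc s m) = map (anc s) (rev [0..<Suc m])"
proof (rule nth_equalityI)
  have l: "length (P s) = Suc (Lv s)" using P_len[OF assms(1)] .
  show "length (P (anc s m)) = length (map (anc s) (rev [0..<Suc m]))"
    using P_anc_drop[OF assms] l assms(2) by simp
  fix j assume "j < length (P (anc s m))"
  then have j: "j < Suc m" using P_anc_drop[OF assms] l assms(2) by simp
  have "P (anc s m) ! j = P s ! (Lv s - m + j)" using P_anc_drop[OF assms] l j assms(2) by simp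
  moreover have "map (anc s) (rev [0..<Suc m]) ! j = anc s (m - j)" using j by (simp add: rev_upt_nth del: upt_Suc)
  moreover have "Lv s - (m - j) = Lv s - m + j" using j assms(2) by linarith
  moreover have "anc s (m - j) = P s ! (Lv s - (m - j))" unfolding anc_def by simp
  ultimately show "P (anc s m) ! j = map (anc s) (rev [0..<Suc m]) ! j" by simp
qed

lemma anc_anc: assumes "s \<in> N" "k \<le> m" "m \<le> Lv s"
  shows "anc (anc s m) k = anc s k"
proof -
  have "anc (anc s m) k = P (anc s m) ! (m - k)" unfolding anc_def[of "anc s m"] using Lv_anc[OF assms(1,3)] by simp
  also have "\<dots> = anc s k" using P_anc[OF assms(1,3)] assms(2) by (simp add: rev_upt_nth del: upt_Suc)
  finally show ?thesis .
qed

lemma anc_top: "s \<in> N \<Longrightarrow> anc s (Lv s) = s"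
  unfolding anc_def using P_hd P_ne by (simp add: hd_conv_nth)

lemma anc_0: "s \<in> N \<Longrightarrow> anc s 0 = r"
  unfolding anc_def using P_last P_ne P_len by (simp add: last_conv_nth)

lemma anc_inj: "s \<in> N \<Longrightarrow> a \<le> Lv s \<Longrightarrow> b \<le> Lv s \<Longrightarrow> anc s a = anc s b \<Longrightarrow> a = b"
  using Lv_anc by metis

lemma anc_edge: assumes "s \<in> N" "k < Lv s" shows "E (anc s (Suc k)) (anc s k)"
proof -
  have w: "is_walk E N (P s)" using P_path[OF assms(1)] by (simp add: is_path_def)
  have "Suc (Lv s - Suc k) < length (P s)" using P_len[OF assms(1)] assms(2) by simp
  then have "E (P s ! (Lv s - Suc k)) (P s ! Suc (Lv s - Suc k))" using w by (simp add: is_walk_def)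
  moreover have "Suc (Lv s - Suc k) = Lv s - k" using assms(2) by simp
  ultimately show ?thesis unfolding anc_def by simp
qed

lemma in_P: assumes "t \<in> N" "x \<in> set (P t)" shows "Lv x \<le> Lv t \<and> x = anc t (Lv x)"
proof -
  obtain i where i: "i < length (P t)" "x = P t ! i" using assms(2) by (auto simp: in_set_conv_nth)
  have "P x = drop i (P t)" using P_drop[OF assms(1) i(1)] i(2) by simp
  then have "length (P x) = Suc (Lv t) - i" using P_len[OF assms(1)] by simp
  then have "Lv x = Lv t - i" using i(1) P_len[OF assms(1)] unfolding level_def by simp
  then show ?thesis using i P_len[OF assms(1)] unfolding anc_def by simp
qed

lemma Lv_r: "Lv r = 0"
proof -
  have "is_path E N r r [r]" using rN by (simp add: is_path_def)
  then have "P r = [r]" by (rule tpath_eq)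
  then show ?thesis by (simp add: level_def)
qed

lemma seg_walk:
  assumes "\<forall>k. b \<le> k \<and> k \<le> a \<longrightarrow> h k \<in> S" "\<forall>k. b \<le> k \<and> k < a \<longrightarrow> E (h (Suc k)) (h k)" "b \<le> a"
  shows "is_walk E S (map h (rev [b..<Suc a]))"
  unfolding is_walk_def
proof (intro conjI allI impI)
  show "map h (rev [b..<Suc a]) \<noteq> []" using assms(3) by simp
  show "set (map h (rev [b..<Suc a])) \<subseteq> S" using assms(1) by auto
  fix i assume "Suc i < length (map h (rev [b..<Suc a]))"
  then have i: "Suc i < Suc a - b" by simp
  have "E (h (Suc (a - Suc i))) (h (a - Suc i))" using assms(2) i by auto
  moreover have "Suc (a - Suc i) = a - i" using i by simp
  ultimately show "E (map h (rev [b..<Suc a]) ! i) (map h (rev [b..<Suc a]) ! Suc i)"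
    using i by (simp add: rev_upt_nth del: upt_Suc)
qed

lemma seg_path: assumes "s \<in> N" "b \<le> a" "a \<le> Lv s"
  shows "is_path E N (anc s a) (anc s b) (map (anc s) (rev [b..<Suc a]))"
  unfolding is_path_def
proof (intro conjI)
  show "is_walk E N (map (anc s) (rev [b..<Suc a]))"
    by (rule seg_walk) (use assms anc_N anc_edge in auto)
  have "inj_on (anc s) {b..<Suc a}" unfolding inj_on_def using anc_inj assms by auto
  then show "distinct (map (anc s) (rev [b..<Suc a]))" by (simp add: distinct_map)
  show "hd (map (anc s) (rev [b..<Suc a])) = anc s a" using assms by (simp add: hd_map hd_rev)
  show "last (map (anc s) (rev [b..<Suc a])) = anc s b" using assms by (simp add: last_map last_rev hd_upt)
qed

lemma seg_tpath: "s \<in> N \<Longrightarrow> b \<le> a \<Longrightarrow> a \<le> Lv s \<Longrightarrow>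
   tpath N E (anc s a) (anc s b) = map (anc s) (rev [b..<Suc a])"
  using seg_path tpath_eq by blast

lemma convex:
  assumes "s \<in> N" "b \<le> k" "k \<le> a" "a \<le> Lv s"
    and cn: "connected_in E {i \<in> N. x \<in> B i}"
    and "x \<in> B (anc s a)" "x \<in> B (anc s b)"
  shows "x \<in> B (anc s k)"
proof -
  define S where "S = {i \<in> N. x \<in> B i}"
  have "anc s a \<in> S" "anc s b \<in> S" using assms anc_N unfolding S_def by auto
  then have "\<exists>xs. is_walk E S xs \<and> hd xs = anc s a \<and> last xs = anc s b"
    using cn unfolding connected_in_def S_def by blast
  then obtain xs where xs: "is_walk E S xs" "hd xs = anc s a" "last xs = anc s b" by blast
  obtain ys where ys: "is_walk E S ys" "distinct ys" "hd ys = hd xs" "last ys = last xs"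
    using walk_to_path[OF xs(1)] by blast
  have SN: "S \<subseteq> N" unfolding S_def by blast
  have "is_path E N (anc s a) (anc s b) ys" unfolding is_path_def
    using ys xs walk_mono[OF ys(1) SN] by simp
  moreover have "is_path E N (anc s a) (anc s b) (map (anc s) (rev [b..<Suc a]))"
    using seg_path[OF assms(1) _ assms(4)] assms(2,3) by simp
  ultimately have "ys = map (anc s) (rev [b..<Suc a])" by (rule path_unique)
  moreover have "anc s k \<in> set (map (anc s) (rev [b..<Suc a]))" using assms(2,3) by auto
  ultimately have "anc s k \<in> S" using walk_set[OF ys(1)] by blast
  then show ?thesis unfolding S_def by blast
qed

end


context rt begin

definition lc where "lc s t = Max {k. k \<le> Lv s \<and> k \<le> Lv t \<and> anc s k = anc t k}"

lemma lc_props: assumes "s \<in> N" "t \<in> N"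
  shows "lc s t \<le> Lv s" "lc s t \<le> Lv t" "anc s (lc s t) = anc t (lc s t)"
    and "\<And>k. k \<le> Lv s \<Longrightarrow> k \<le> Lv t \<Longrightarrow> anc s k = anc t k \<Longrightarrow> k \<le> lc s t"
proof -
  let ?K = "{k. k \<le> Lv s \<and> k \<le> Lv t \<and> anc s k = anc t k}"
  have fin: "finite ?K" by (rule finite_subset[of _ "{..Lv s}"]) auto
  have "0 \<in> ?K" using anc_0 assms by simp
  then have ne: "?K \<noteq> {}" by blast
  have "lc s t \<in> ?K" unfolding lc_def using Max_in[OF fin ne] .
  then show "lc s t \<le> Lv s" "lc s t \<le> Lv t" "anc s (lc s t) = anc t (lc s t)" by auto
  fix k assume "k \<le> Lv s" "k \<le> Lv t" "anc s k = anc t k"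
  then show "k \<le> lc s t" unfolding lc_def using Max_ge[OF fin] by blast
qed

lemma lc_above: assumes "s \<in> N" "t \<in> N" "lc s t < k" "k \<le> Lv s" "lc s t < k'" "k' \<le> Lv t"
  shows "anc s k \<noteq> anc t k'"
proof
  assume eq: "anc s k = anc t k'"
  then have "k = k'" using Lv_anc assms by metis
  then show False using lc_props(4)[OF assms(1,2)] assms eq by force
qed

lemma tpath_st: assumes "s \<in> N" "t \<in> N"
  shows "tpath N E s t = map (anc s) (rev [lc s t..<Suc (Lv s)]) @ map (anc t) [Suc (lc s t)..<Suc (Lv t)]"
proof (rule tpath_eq)
  define l where "l = lc s t"
  note lp = lc_props[OF assms, folded l_def]
  let ?U = "map (anc s) (rev [l..<Suc (Lv s)])"
  let ?D = "map (anc t) [Suc l..<Suc (Lv t)]"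
  have pU: "is_path E N s (anc s l) ?U" using seg_path[OF assms(1) lp(1) order_refl] anc_top[OF assms(1)] by simp
  have dU: "distinct ?U" using pU by (simp add: is_path_def)
  have disj: "set ?U \<inter> set ?D = {}"
  proof (rule ccontr)
    assume "set ?U \<inter> set ?D \<noteq> {}"
    then obtain k k' where k: "l \<le> k" "k \<le> Lv s" "l < k'" "k' \<le> Lv t" "anc s k = anc t k'"
      by (auto simp: less_Suc_eq_le Suc_le_eq)
    show False
    proof (cases "k = l")
      case True
      then have "anc t l = anc t k'" using k lp by simp
      then have "l = k'" using anc_inj[OF assms(2)] lp k by blast
      then show False using k by simp
    next
      case False
      then show False using lc_above[OF assms, folded l_def] k by simp
    qed
  qed
  show "is_path E N s t (?U @ ?D)"
  proof (cases "l = Lv t")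
    case True
    then have "?D = []" by simp
    then show ?thesis using pU lp True anc_top[OF assms(2)] by simp
  next
    case False
    then have lt: "l < Lv t" using lp by simp
    have pD: "is_path E N (anc t (Lv t)) (anc t (Suc l)) (map (anc t) (rev [Suc l..<Suc (Lv t)]))"
      using seg_path[OF assms(2) _ order_refl] lt by simp
    have Deq: "?D = rev (map (anc t) (rev [Suc l..<Suc (Lv t)]))" by (simp add: rev_map)
    have wD0: "is_walk E N (map (anc t) (rev [Suc l..<Suc (Lv t)]))" using pD unfolding is_path_def by blast
    have wD: "is_walk E N ?D" unfolding Deq using walk_rev[OF _ wD0] symE by blast
    have dD: "distinct ?D" using pD unfolding Deq by (simp add: is_path_def)
    have hdD: "hd ?D = anc t (Suc l)" using lt by (simp add: upt_rec)
    have lastD: "last ?D = t" using lt anc_top[OF assms(2)] by (simp add: last_map)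
    have DN: "?D \<noteq> []" using lt by simp
    have "E (anc t l) (anc t (Suc l))" using symE[OF anc_edge[OF assms(2) lt]] .
    moreover have "is_walk E N ?U" "last ?U = anc s l" "?U \<noteq> []" using pU unfolding is_path_def by (auto simp: is_walk_def)
    ultimately have "is_walk E N (?U @ ?D)" using wD DN lp(3) hdD walk_append by metis
    moreover have "?U \<noteq> []" using lp(1) by simp
    ultimately show ?thesis unfolding is_path_def using dU dD disj pU DN lastD
      by (auto simp: is_path_def)
  qed
qed

end


definition gg :: "nat \<Rightarrow> nat \<Rightarrow> nat" where "gg lam m = (m - 1) div lam * lam"
definition KK :: "nat \<Rightarrow> nat \<Rightarrow> nat set" where "KK lam m = {j. j \<le> m \<and> (gg lam m \<le> j \<or> lam dvd j)}"
definition GG :: "nat \<Rightarrow> (nat \<Rightarrow> 'v set) \<Rightarrow> nat \<Rightarrow> 'v set" where "GG lam f m = \<Union> (f ` KK lam m)"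

lemma gg_lt: assumes "1 \<le> m" shows "gg lam m < m"
proof -
  have "(m - 1) div lam * lam \<le> m - 1" by (rule div_times_less_eq_dividend)
  then show ?thesis unfolding gg_def using assms by linarith
qed

lemma gg_dvd: "lam dvd gg lam m" unfolding gg_def by simp

lemma gg_max: assumes "1 \<le> lam" "lam dvd j" "j < m" shows "j \<le> gg lam m"
proof -
  obtain q where q: "j = q * lam" using assms(2) by (auto simp: dvd_def mult.commute)
  have "q * lam \<le> m - 1" using assms(3) q by simp
  then have "q \<le> (m - 1) div lam" using assms(1) by (simp add: less_eq_div_iff_mult_less_eq)
  then have "q * lam \<le> (m - 1) div lam * lam" by simp
  then show ?thesis unfolding gg_def q .
qed

lemma gg_nodvd: "1 \<le> lam \<Longrightarrow> gg lam m < j \<Longrightarrow> j < m \<Longrightarrow> \<not> lam dvd j"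
  using gg_max by (meson not_le)

lemma gg_Suc: assumes "1 \<le> lam" "\<not> lam dvd m" shows "gg lam (Suc m) = gg lam m"
proof -
  have m1: "1 \<le> m" using assms(2) by (cases m) auto
  have a: "gg lam (Suc m) < Suc m" using gg_lt by simp
  have "gg lam (Suc m) \<noteq> m" using assms(2) gg_dvd by metis
  then have "gg lam (Suc m) < m" using a by simp
  then have "gg lam (Suc m) \<le> gg lam m" using gg_max[OF assms(1) gg_dvd] by blast
  moreover have "gg lam m < Suc m" using gg_lt[OF m1, of lam] by linarith
  then have "gg lam m \<le> gg lam (Suc m)" using gg_max[OF assms(1) gg_dvd] by blast
  ultimately show ?thesis by simp
qed

lemma gg_0: "gg lam 0 = 0" unfolding gg_def by simp

lemma KK_0: "KK lam 0 = {0}" unfolding KK_def by auto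

lemma KK_mono: assumes "1 \<le> lam" "\<not> lam dvd m" shows "KK lam m \<subseteq> KK lam (Suc m)"
  unfolding KK_def using gg_Suc[OF assms] by auto

lemma GG_mono: "1 \<le> lam \<Longrightarrow> \<not> lam dvd m \<Longrightarrow> GG lam f m \<subseteq> GG lam f (Suc m)"
  unfolding GG_def using KK_mono by blast

context rt begin

lemma nb_formula: assumes "s \<in> N" "m \<le> Lv s" "1 \<le> lam"
  shows "new_bags N E r lam B (anc s m) = GG lam (\<lambda>j. B (anc s j)) m"
proof (cases "m = 0")
  case True
  then show ?thesis using anc_0[OF assms(1)] by (simp add: new_bags_def GG_def KK_0)
next
  case False
  let ?v = "anc s m"
  let ?g = "gg lam m"
  have m1: "1 \<le> m" using False by simp
  have vr: "?v \<noteq> r" using Lv_anc[OF assms(1,2)] Lv_r False by metis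
  have Pv: "P ?v = map (anc s) (rev [0..<Suc m])" by (rule P_anc[OF assms(1,2)])
  have sync_iff: "\<And>j. j \<le> Lv s \<Longrightarrow> sync_node N E r lam (anc s j) \<longleftrightarrow> lam dvd j"
    unfolding sync_node_def using Lv_anc[OF assms(1)] by simp
  have glt: "?g < m" by (rule gg_lt[OF m1])
  have tlP: "tl (P ?v) = map (anc s) (rev [0..<m])" unfolding Pv by (simp add: upt_Suc)
  have "filter (sync_node N E r lam) (tl (P ?v)) = map (anc s) (filter (\<lambda>j. lam dvd j) (rev [0..<m]))"
    unfolding tlP filter_map o_def
    by (rule arg_cong[where f="map (anc s)"], rule filter_cong) (use sync_iff assms(2) in auto)
  moreover have "rev [0..<m] = rev [Suc ?g..<m] @ [?g] @ rev [0..<?g]"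
  proof -
    have "[0..<m] = [0..<?g] @ [?g..<m]" using glt upt_add_eq_append[of 0 ?g "m - ?g"] by simp
    moreover have "[?g..<m] = ?g # [Suc ?g..<m]" using glt upt_conv_Cons by blast
    ultimately show ?thesis by simp
  qed
  moreover have "filter (\<lambda>j. lam dvd j) (rev [Suc ?g..<m]) = []"
    using gg_nodvd[OF assms(3)] by (auto simp: filter_empty_conv Suc_le_eq)
  ultimately have sig: "sigma N E r lam ?v = anc s ?g"
    unfolding sigma_def by (simp add: gg_dvd)
  have seg: "tpath N E ?v (sigma N E r lam ?v) = map (anc s) (rev [?g..<Suc m])"
    unfolding sig using seg_tpath[OF assms(1) _ assms(2)] glt by simp
  have setP: "set (P ?v) = anc s ` {0..m}" unfolding Pv by auto
  have setS: "set (map (anc s) (rev [?g..<Suc m])) = anc s ` {?g..m}" by auto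
  have inj: "\<And>a b. a \<le> m \<Longrightarrow> b \<le> m \<Longrightarrow> anc s a = anc s b \<Longrightarrow> a = b"
    using anc_inj[OF assms(1)] assms(2) by (meson le_trans)
  have key: "{w. w \<in> set (P ?v) \<and> (w \<in> set (tpath N E ?v (sigma N E r lam ?v)) \<or> sync_node N E r lam w)}
       = anc s ` KK lam m"
  proof (rule set_eqI, rule iffI)
    fix w assume "w \<in> {w. w \<in> set (P ?v) \<and> (w \<in> set (tpath N E ?v (sigma N E r lam ?v)) \<or> sync_node N E r lam w)}"
    then obtain j where j: "j \<le> m" "w = anc s j" and c: "w \<in> anc s ` {?g..m} \<or> sync_node N E r lam w"
      unfolding setP seg setS by auto
    have "j \<in> KK lam m"
    proof (cases "w \<in> anc s ` {?g..m}")
      case True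
      then obtain j' where "j' \<in> {?g..m}" "w = anc s j'" by auto
      then show ?thesis using inj j unfolding KK_def by auto
    next
      case False
      then have "lam dvd j" using c j sync_iff assms(2) by auto
      then show ?thesis using j unfolding KK_def by auto
    qed
    then show "w \<in> anc s ` KK lam m" using j by auto
  next
    fix w assume "w \<in> anc s ` KK lam m"
    then obtain j where j: "j \<in> KK lam m" "w = anc s j" by auto
    then have "j \<le> m" unfolding KK_def by auto
    then have "w \<in> set (P ?v)" using j setP by auto
    moreover have "w \<in> anc s ` {?g..m} \<or> sync_node N E r lam w"
      using j \<open>j \<le> m\<close> sync_iff assms(2) unfolding KK_def by auto
    ultimately show "w \<in> {w. w \<in> set (P ?v) \<and> (w \<in> set (tpath N E ?v (sigma N E r lam ?v)) \<or> sync_node N E r lam w)}"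
      unfolding seg setS by blast
  qed
  have "new_bags N E r lam B ?v = \<Union> (B ` {w. w \<in> set (P ?v) \<and> (w \<in> set (tpath N E ?v (sigma N E r lam ?v)) \<or> sync_node N E r lam w)})"
    unfolding new_bags_def using vr by (auto)
  also have "\<dots> = GG lam (\<lambda>j. B (anc s j)) m" unfolding key GG_def by (simp add: image_image)
  finally show ?thesis .
qed

end


lemma rtranclp_map: assumes "\<And>x y. R x y \<Longrightarrow> S (f x) (f y)" "R\<^sup>*\<^sup>* x y" shows "S\<^sup>*\<^sup>* (f x) (f y)"
  using assms(2) by (induction rule: rtranclp_induct) (auto intro: rtranclp.rtrancl_into_rtrancl assms(1))

lemma bs_intro: "0 < i \<Longrightarrow> Suc i < length xs \<Longrightarrow>
   (B (xs!i) \<inter> B (xs!Suc i) \<subseteq> B (xs!(i-1)) \<or> B (xs!i) \<inter> B (xs!(i-1)) \<subseteq> B (xs!Suc i)) \<Longrightarrow>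
   bypass_step B xs (take i xs @ drop (Suc i) xs)"
  unfolding bypass_step_def by blast

lemma bs3: "B y \<inter> B z \<subseteq> B a \<Longrightarrow> bypass_step B (a # y # z # zs) (a # z # zs)"
  using bs_intro[of 1 "a # y # z # zs" B] by simp

lemma bs_append: assumes "bypass_step B xs ys" shows "bypass_step B (xs @ zs) (ys @ zs)"
proof -
  obtain i where i: "0 < i" "Suc i < length xs"
    "B (xs ! i) \<inter> B (xs ! Suc i) \<subseteq> B (xs ! (i - 1)) \<or> B (xs ! i) \<inter> B (xs ! (i - 1)) \<subseteq> B (xs ! Suc i)"
    "ys = take i xs @ drop (Suc i) xs" using assms unfolding bypass_step_def by blast
  show ?thesis unfolding bypass_step_def
    by (rule exI[of _ i]) (use i in \<open>auto simp: nth_append\<close>)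
qed

lemma bs_prepend: assumes "bypass_step B xs ys" shows "bypass_step B (zs @ xs) (zs @ ys)"
proof -
  obtain i where i: "0 < i" "Suc i < length xs"
    "B (xs ! i) \<inter> B (xs ! Suc i) \<subseteq> B (xs ! (i - 1)) \<or> B (xs ! i) \<inter> B (xs ! (i - 1)) \<subseteq> B (xs ! Suc i)"
    "ys = take i xs @ drop (Suc i) xs" using assms unfolding bypass_step_def by blast
  have e: "length zs + i - 1 = length zs + (i - 1)" "Suc (length zs + i) = length zs + Suc i" using i by auto
  show ?thesis unfolding bypass_step_def
    by (rule exI[of _ "length zs + i"]) (use i e in \<open>auto simp: nth_append\<close>)
qed

lemma bs_map: assumes "bypass_step (\<lambda>k. B (h k)) xs ys" shows "bypass_step B (map h xs) (map h ys)"
proof -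
  obtain i where i: "0 < i" "Suc i < length xs"
    "B (h (xs ! i)) \<inter> B (h (xs ! Suc i)) \<subseteq> B (h (xs ! (i - 1))) \<or> B (h (xs ! i)) \<inter> B (h (xs ! (i - 1))) \<subseteq> B (h (xs ! Suc i))"
    "ys = take i xs @ drop (Suc i) xs" using assms unfolding bypass_step_def by blast
  show ?thesis unfolding bypass_step_def
    by (rule exI[of _ i]) (use i in \<open>auto simp: take_map drop_map\<close>)
qed

lemma bs_rev: assumes "bypass_step B xs ys" shows "bypass_step B (rev xs) (rev ys)"
proof -
  obtain i where i: "0 < i" "Suc i < length xs"
    "B (xs ! i) \<inter> B (xs ! Suc i) \<subseteq> B (xs ! (i - 1)) \<or> B (xs ! i) \<inter> B (xs ! (i - 1)) \<subseteq> B (xs ! Suc i)"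
    "ys = take i xs @ drop (Suc i) xs" using assms unfolding bypass_step_def by blast
  define n where "n = length xs"
  define j where "j = n - Suc i"
  have j: "0 < j" "Suc j < length (rev xs)" using i unfolding j_def n_def by auto
  have r1: "rev xs ! j = xs ! i" using i unfolding j_def n_def by (simp add: rev_nth)
  have e2: "length xs - Suc (Suc (length xs - Suc i)) = i - 1" using i by simp
  have r2: "rev xs ! Suc j = xs ! (i - 1)" using i unfolding j_def n_def by (simp add: rev_nth e2)
  have r3: "rev xs ! (j - 1) = xs ! Suc i" using i unfolding j_def n_def by (simp add: rev_nth Suc_diff_Suc)
  have e3: "length xs - (length xs - Suc i) = Suc i" using i by simp
  have t1: "rev (drop (Suc i) xs) = take j (rev xs)" unfolding j_def n_def by (simp add: take_rev e3)
  have t2: "rev (take i xs) = drop (Suc j) (rev xs)" using i unfolding j_def n_def by (simp add: drop_rev)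
  have "rev ys = take j (rev xs) @ drop (Suc j) (rev xs)" using i t1 t2 by simp
  then show ?thesis unfolding bypass_step_def
    by (intro exI[of _ j]) (use j i(3) r1 r2 r3 in auto)
qed

lemma bs_set: assumes "bypass_step B xs ys" shows "set ys \<subseteq> set xs"
proof -
  obtain i where "ys = take i xs @ drop (Suc i) xs" using assms unfolding bypass_step_def by blast
  then show ?thesis by (auto dest: in_set_takeD in_set_dropD)
qed

lemma bs_cong: assumes "bypass_step B xs ys" "\<forall>x\<in>set xs. B x = B' x" shows "bypass_step B' xs ys"
proof -
  obtain i where i: "0 < i" "Suc i < length xs"
    "B (xs ! i) \<inter> B (xs ! Suc i) \<subseteq> B (xs ! (i - 1)) \<or> B (xs ! i) \<inter> B (xs ! (i - 1)) \<subseteq> B (xs ! Suc i)"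
    "ys = take i xs @ drop (Suc i) xs" using assms unfolding bypass_step_def by blast
  have "xs ! i \<in> set xs" "xs ! Suc i \<in> set xs" "xs ! (i - 1) \<in> set xs" using i by auto
  then show ?thesis unfolding bypass_step_def using i assms(2) by (intro exI[of _ i]) auto
qed

lemma rtc_cong: assumes "(bypass_step B)\<^sup>*\<^sup>* xs ys" "\<forall>x\<in>set xs. B x = B' x"
  shows "(bypass_step B')\<^sup>*\<^sup>* xs ys"
proof -
  have "(bypass_step B')\<^sup>*\<^sup>* xs ys \<and> set ys \<subseteq> set xs"
    using assms(1)
  proof (induction rule: rtranclp_induct)
    case base then show ?case by simp
  next
    case (step y z)
    then have "bypass_step B' y z" using bs_cong assms(2) by blast
    then show ?case using step bs_set by (meson rtranclp.rtrancl_into_rtrancl order_trans)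
  qed
  then show ?thesis by blast
qed

lemma rtc_append: "(bypass_step B)\<^sup>*\<^sup>* xs ys \<Longrightarrow> (bypass_step B)\<^sup>*\<^sup>* (xs @ zs) (ys @ zs)"
  by (rule rtranclp_map[where f="\<lambda>l. l @ zs"]) (auto intro: bs_append)

lemma rtc_prepend: "(bypass_step B)\<^sup>*\<^sup>* xs ys \<Longrightarrow> (bypass_step B)\<^sup>*\<^sup>* (zs @ xs) (zs @ ys)"
  by (rule rtranclp_map[where f="\<lambda>l. zs @ l"]) (auto intro: bs_prepend)

lemma rtc_rev: "(bypass_step B)\<^sup>*\<^sup>* xs ys \<Longrightarrow> (bypass_step B)\<^sup>*\<^sup>* (rev xs) (rev ys)"
  by (rule rtranclp_map[where f="rev"]) (auto intro: bs_rev)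

lemma rtc_map: "(bypass_step (\<lambda>k. B (h k)))\<^sup>*\<^sup>* xs ys \<Longrightarrow> (bypass_step B)\<^sup>*\<^sup>* (map h xs) (map h ys)"
  by (rule rtranclp_map[where f="map h"]) (auto intro: bs_map)

lemma phase1:
  "xs \<noteq> [] \<Longrightarrow> keep (hd xs) \<Longrightarrow> keep (last xs) \<Longrightarrow>
   (\<forall>i. Suc i < length xs \<longrightarrow> \<not> keep (xs ! Suc i) \<longrightarrow> B (xs ! Suc i) \<subseteq> B (xs ! i)) \<Longrightarrow>
   (bypass_step B)\<^sup>*\<^sup>* xs (filter keep xs)"
proof (induction "length xs" arbitrary: xs rule: less_induct)
  case less
  show ?case
  proof (cases xs)
    case Nil then show ?thesis using less by simp
  next
    case (Cons a xs1)
    show ?thesis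
    proof (cases xs1)
      case Nil then show ?thesis using less Cons by simp
    next
      case (Cons y zs)
      note xs = \<open>xs = a # xs1\<close>[unfolded Cons]
      have ka: "keep a" using less xs by simp
      show ?thesis
      proof (cases "keep y")
        case True
        have c: "\<forall>i. Suc i < length (y # zs) \<longrightarrow> \<not> keep ((y # zs) ! Suc i) \<longrightarrow> B ((y # zs) ! Suc i) \<subseteq> B ((y # zs) ! i)"
        proof (intro allI impI)
          fix i assume "Suc i < length (y # zs)" "\<not> keep ((y # zs) ! Suc i)"
          then show "B ((y # zs) ! Suc i) \<subseteq> B ((y # zs) ! i)"
            using less.prems(4)[rule_format, of "Suc i"] xs by simp
        qed
        have "(bypass_step B)\<^sup>*\<^sup>* (y # zs) (filter keep (y # zs))"
          using less.hyps[of "y # zs"] xs less.prems c True by (simp add: last_ConsR)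
        then have "(bypass_step B)\<^sup>*\<^sup>* ([a] @ (y # zs)) ([a] @ filter keep (y # zs))" by (rule rtc_prepend)
        then show ?thesis using xs ka by simp
      next
        case False
        have zne: "zs \<noteq> []" using False less.prems(3) xs by auto
        then obtain z zs' where zs: "zs = z # zs'" by (cases zs) auto
        have By: "B y \<subseteq> B a" using less.prems(4)[rule_format, of 0] xs False by simp
        have st: "bypass_step B xs (a # zs)" unfolding xs zs by (rule bs3) (use By in blast)
        have c: "\<forall>i. Suc i < length (a # zs) \<longrightarrow> \<not> keep ((a # zs) ! Suc i) \<longrightarrow> B ((a # zs) ! Suc i) \<subseteq> B ((a # zs) ! i)"
        proof (intro allI impI)
          fix i assume i: "Suc i < length (a # zs)" "\<not> keep ((a # zs) ! Suc i)"
          show "B ((a # zs) ! Suc i) \<subseteq> B ((a # zs) ! i)"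
          proof (cases i)
            case 0
            then have "B z \<subseteq> B y" using less.prems(4)[rule_format, of 1] xs zs i by simp
            then show ?thesis using 0 zs By by simp
          next
            case (Suc i')
            then show ?thesis using less.prems(4)[rule_format, of "Suc (Suc i')"] xs i by simp
          qed
        qed
        have "(bypass_step B)\<^sup>*\<^sup>* (a # zs) (filter keep (a # zs))"
          using less.hyps[of "a # zs"] xs less.prems c zne ka by (simp add: last_ConsR)
        moreover have "filter keep (a # zs) = filter keep xs" using xs False by simp
        ultimately show ?thesis using st by (metis converse_rtranclp_into_rtranclp)
      qed
    qed
  qed
qed

lemma phase2:
  "(\<forall>i < length ys. B (ys ! i) \<inter> B ((ys @ [b]) ! Suc i) \<subseteq> B a) \<Longrightarrow>
   (bypass_step B)\<^sup>*\<^sup>* (a # ys @ [b]) [a, b]"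
proof (induction ys)
  case Nil then show ?case by simp
next
  case (Cons y ys)
  have "B y \<inter> B ((ys @ [b]) ! 0) \<subseteq> B a" using Cons.prems[rule_format, of 0] by simp
  then have st: "bypass_step B (a # y # (ys @ [b])) (a # ys @ [b])"
    by (cases ys) (auto intro: bs3)
  have "\<forall>i < length ys. B (ys ! i) \<inter> B ((ys @ [b]) ! Suc i) \<subseteq> B a"
  proof (intro allI impI)
    fix i assume "i < length ys"
    then show "B (ys ! i) \<inter> B ((ys @ [b]) ! Suc i) \<subseteq> B a"
      using Cons.prems[rule_format, of "Suc i"] by simp
  qed
  then have "(bypass_step B)\<^sup>*\<^sup>* (a # ys @ [b]) [a, b]" by (rule Cons.IH)
  then show ?case using st by (simp add: converse_rtranclp_into_rtranclp)
qed


lemma rev_upt_nth': "j < Suc a - b \<Longrightarrow> rev [b..<Suc a] ! j = a - j"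
  by (simp add: rev_nth del: upt_Suc)

lemma C2: assumes lam: "1 \<le> lam"
  and cv: "\<And>x a b k. b \<le> k \<Longrightarrow> k \<le> a \<Longrightarrow> a \<le> L \<Longrightarrow> x \<in> f a \<Longrightarrow> x \<in> f b \<Longrightarrow> x \<in> f k"
  and "lam dvd a" "lam dvd b" "b < a" "a \<le> L"
  shows "GG lam f a \<inter> GG lam f b \<subseteq> GG lam f L"
proof
  fix x assume "x \<in> GG lam f a \<inter> GG lam f b"
  then obtain k1 k2 where k1: "k1 \<in> KK lam a" "x \<in> f k1" and k2: "k2 \<in> KK lam b" "x \<in> f k2"
    unfolding GG_def by blast
  have inL: "\<And>k. k \<le> L \<Longrightarrow> lam dvd k \<Longrightarrow> k \<in> KK lam L" unfolding KK_def by auto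
  have k1a: "k1 \<le> a" "k2 \<le> b" using k1 k2 unfolding KK_def by auto
  show "x \<in> GG lam f L"
  proof (cases "lam dvd k1 \<or> lam dvd k2")
    case True
    then have "k1 \<in> KK lam L \<and> lam dvd k1 \<or> k2 \<in> KK lam L \<and> lam dvd k2"
      using inL k1a assms(3,4,5,6) by auto
    then show ?thesis using k1 k2 unfolding GG_def by blast
  next
    case False
    have "gg lam a \<le> k1" using k1 False unfolding KK_def by auto
    moreover have "b \<le> gg lam a" by (rule gg_max[OF lam assms(4,5)])
    ultimately have "b < k1" using False assms(4) by (cases "b = k1") auto
    then have "x \<in> f b" using cv[of k2 b k1 x] k1a k1 k2 assms(5,6) by simp
    moreover have "b \<in> KK lam L" using inL assms(4,5,6) by simp
    ultimately show ?thesis unfolding GG_def by blast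
  qed
qed

lemma chain_aux: assumes "1 \<le> lam"
  shows "(\<forall>j. m \<le> j \<and> j < m + d \<longrightarrow> \<not> lam dvd j) \<longrightarrow> GG lam f m \<subseteq> GG lam f (m + d)"
proof (induction d)
  case 0 then show ?case by simp
next
  case (Suc d)
  show ?case
  proof
    assume h: "\<forall>j. m \<le> j \<and> j < m + Suc d \<longrightarrow> \<not> lam dvd j"
    then have "GG lam f m \<subseteq> GG lam f (m + d)" using Suc.IH by simp
    moreover have "\<not> lam dvd (m + d)" using h by simp
    then have "GG lam f (m + d) \<subseteq> GG lam f (Suc (m + d))" by (rule GG_mono[OF assms(1)])
    ultimately show "GG lam f m \<subseteq> GG lam f (m + Suc d)" by simp
  qed
qed

lemma chain: assumes "1 \<le> lam" "m \<le> m'" "\<forall>j. m \<le> j \<and> j < m' \<longrightarrow> \<not> lam dvd j"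
  shows "GG lam f m \<subseteq> GG lam f m'"
  using chain_aux[OF assms(1), of m "m' - m" f] assms(2,3) by simp

lemma sorted_last_le: "sorted_wrt (>) xs \<Longrightarrow> x \<in> set xs \<Longrightarrow> last xs \<le> (x::nat)"
proof (induction xs)
  case Nil then show ?case by simp
next
  case (Cons y ys)
  show ?case
  proof (cases "ys = []")
    case True then show ?thesis using Cons by simp
  next
    case False
    then have "last ys \<in> set ys" by simp
    then show ?thesis using Cons False by (auto intro: less_imp_le)
  qed
qed

lemma side: assumes lam: "1 \<le> lam"
  and cvo: "\<forall>x a b k. b \<le> k \<longrightarrow> k \<le> a \<longrightarrow> a \<le> L \<longrightarrow> x \<in> f a \<longrightarrow> x \<in> f b \<longrightarrow> x \<in> f k"
  and lL: "l < L"
  shows "\<exists>ys. (bypass_step (GG lam f))\<^sup>*\<^sup>* (rev [l..<Suc L]) ys \<and>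
    ((lam dvd l \<and> ys = [L, l]) \<or>
     (\<not> lam dvd l \<and> ((ys = [L, l] \<and> GG lam f l \<subseteq> GG lam f L) \<or> (\<exists>a. a < L \<and> ys = [L, a, l] \<and> GG lam f l \<subseteq> GG lam f a))))"
proof -
  have cv: "\<And>x a b k. b \<le> k \<Longrightarrow> k \<le> a \<Longrightarrow> a \<le> L \<Longrightarrow> x \<in> f a \<Longrightarrow> x \<in> f b \<Longrightarrow> x \<in> f k"
    using cvo by blast
  let ?G = "GG lam f"
  define mid where "mid = rev [Suc l..<L]"
  define keep where "keep k = (k = L \<or> k = l \<or> lam dvd k)" for k
  define ks where "ks = rev [l..<Suc L]"
  have ks_eq: "ks = L # mid @ [l]"
  proof -
    have "[l..<Suc L] = l # [Suc l..<L] @ [L]" using lL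
      by (simp add: upt_conv_Cons upt_Suc_append)
    then show ?thesis unfolding ks_def mid_def by simp
  qed
  have len: "length ks = Suc L - l" unfolding ks_def using lL by simp
  have ksn: "\<And>i. i < Suc L - l \<Longrightarrow> ks ! i = L - i" unfolding ks_def by (rule rev_upt_nth')
  have p1: "(bypass_step ?G)\<^sup>*\<^sup>* ks (filter keep ks)"
  proof (rule phase1)
    show "ks \<noteq> []" "keep (hd ks)" "keep (last ks)" unfolding ks_eq keep_def by auto
    show "\<forall>i. Suc i < length ks \<longrightarrow> \<not> keep (ks ! Suc i) \<longrightarrow> ?G (ks ! Suc i) \<subseteq> ?G (ks ! i)"
    proof (intro allI impI)
      fix i assume i: "Suc i < length ks" "\<not> keep (ks ! Suc i)"
      have a: "ks ! Suc i = L - Suc i" "ks ! i = Suc (L - Suc i)" using ksn i(1) len by auto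
      then have "\<not> lam dvd (L - Suc i)" using i(2) unfolding keep_def by simp
      then show "?G (ks ! Suc i) \<subseteq> ?G (ks ! i)" unfolding a by (rule GG_mono[OF lam])
    qed
  qed
  define S where "S = filter (\<lambda>k. lam dvd k) mid"
  have midset: "set mid = {Suc l..<L}" unfolding mid_def by simp
  have fk: "filter keep ks = L # S @ [l]"
  proof -
    have "filter keep mid = S" unfolding S_def
      by (rule filter_cong) (use midset in \<open>auto simp: keep_def\<close>)
    then show ?thesis unfolding ks_eq keep_def by simp
  qed
  define T where "T = filter (\<lambda>k. lam dvd k) (rev [l..<L])"
  have sT: "sorted_wrt (>) T" unfolding T_def
    by (rule sorted_wrt_filter) (simp add: sorted_wrt_rev sorted_wrt_upt)
  have Tset: "set T = {k. l \<le> k \<and> k < L \<and> lam dvd k}" unfolding T_def by auto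
  have midl: "mid @ [l] = rev [l..<L]" unfolding mid_def using lL by (simp add: upt_conv_Cons)
  have cond: "\<And>i. Suc i < length T \<Longrightarrow> ?G (T ! i) \<inter> ?G (T ! Suc i) \<subseteq> ?G L"
  proof -
    fix i assume i: "Suc i < length T"
    have "T ! Suc i < T ! i" using sorted_wrt_nth_less[OF sT, of i "Suc i"] i by simp
    moreover have "T ! i \<in> set T" "T ! Suc i \<in> set T" using i by auto
    ultimately have "lam dvd T ! i" "T ! i < L" "lam dvd T ! Suc i" "T ! Suc i < T ! i"
      unfolding Tset by auto
    then show "?G (T ! i) \<inter> ?G (T ! Suc i) \<subseteq> ?G L"
      using C2[OF lam cv, where a="T ! i" and b="T ! Suc i"] by simp
  qed
  show ?thesis
  proof (cases "lam dvd l")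
    case True
    have TS: "T = S @ [l]" unfolding T_def S_def midl[symmetric] using True by simp
    have "(bypass_step ?G)\<^sup>*\<^sup>* (L # S @ [l]) [L, l]"
    proof (rule phase2, intro allI impI)
      fix i assume "i < length S"
      then show "?G (S ! i) \<inter> ?G ((S @ [l]) ! Suc i) \<subseteq> ?G L"
        using cond[of i] TS by (simp add: nth_append)
    qed
    then show ?thesis using p1 fk True unfolding ks_def by (metis rtranclp_trans)
  next
    case False
    have TS: "T = S" unfolding T_def S_def midl[symmetric] using False by simp
    show ?thesis
    proof (cases "S = []")
      case True
      have "?G l \<subseteq> ?G L"
      proof (rule chain[OF lam], use lL in simp, intro allI impI)
        fix j assume j: "l \<le> j \<and> j < L"
        show "\<not> lam dvd j"
        proof
          assume "lam dvd j"
          then have "j \<in> set T" using Tset j by simp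
          then show False using TS True by simp
        qed
      qed
      moreover have "(bypass_step ?G)\<^sup>*\<^sup>* (rev [l..<Suc L]) [L, l]" using p1 fk True unfolding ks_def by simp
      ultimately show ?thesis using False by blast
    next
      case Sne: False
      define a where "a = last S"
      have Sa: "S = butlast S @ [a]" unfolding a_def using Sne by simp
      have Sa2: "length (butlast S) < length S" using Sne by simp
      have "(bypass_step ?G)\<^sup>*\<^sup>* (L # butlast S @ [a]) [L, a]"
      proof (rule phase2, intro allI impI)
        fix i assume i: "i < length (butlast S)"
        have "Suc i < length T" using i TS Sne by (simp del: Sa)
        moreover have "butlast S ! i = S ! i" using i by (simp add: nth_butlast)
        moreover have "(butlast S @ [a]) ! Suc i = S ! Suc i" by (simp only: Sa[symmetric])
        ultimately show "?G (butlast S ! i) \<inter> ?G ((butlast S @ [a]) ! Suc i) \<subseteq> ?G L"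
          using cond[of i] TS by simp
      qed
      then have "(bypass_step ?G)\<^sup>*\<^sup>* ((L # butlast S @ [a]) @ [l]) ([L, a] @ [l])" by (rule rtc_append)
      moreover have "filter keep ks = (L # butlast S @ [a]) @ [l]" unfolding fk by (subst Sa) simp
      ultimately have r2: "(bypass_step ?G)\<^sup>*\<^sup>* (filter keep ks) [L, a, l]" by simp
      have ainT: "a \<in> set T" using TS Sne a_def by simp
      have "?G l \<subseteq> ?G a"
      proof (rule chain[OF lam], use ainT Tset in simp, intro allI impI)
        fix j assume j: "l \<le> j \<and> j < a"
        show "\<not> lam dvd j"
        proof
          assume "lam dvd j"
          then have "j \<in> set T" using Tset j ainT by simp
          then have "a \<le> j" using sorted_last_le[OF sT] TS a_def by simp
          then show False using j by simp
        qed
      qed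
      moreover have "(bypass_step ?G)\<^sup>*\<^sup>* (rev [l..<Suc L]) [L, a, l]" using p1 r2 unfolding ks_def by (rule rtranclp_trans)
      moreover have "a < L" using ainT Tset by simp
      ultimately show ?thesis using False by blast
    qed
  qed
qed


lemma len3: "length xs = 3 \<Longrightarrow> \<exists>a b c. xs = [a, b, c]"
  by (cases xs; cases "tl xs"; cases "tl (tl xs)") (auto simp: numeral_3_eq_3)

context rt begin

lemma side_node:
  assumes lam: "1 \<le> lam" and cn: "\<And>x. connected_in E {i \<in> N. x \<in> B i}"
    and s: "s \<in> N" and l: "l < Lv s"
  shows "\<exists>ys. (bypass_step (new_bags N E r lam B))\<^sup>*\<^sup>* (map (anc s) (rev [l..<Suc (Lv s)])) ys \<and>
     ys \<noteq> [] \<and> last ys = anc s l \<and> length ys \<le> 3 \<and> (lam dvd l \<longrightarrow> length ys \<le> 2) \<and>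
     (length ys = 3 \<longrightarrow> new_bags N E r lam B (anc s l) \<subseteq> new_bags N E r lam B (ys ! 1))"
proof -
  let ?B' = "new_bags N E r lam B"
  let ?f = "\<lambda>j. B (anc s j)"
  have cv: "\<forall>x a b k. b \<le> k \<longrightarrow> k \<le> a \<longrightarrow> a \<le> Lv s \<longrightarrow> x \<in> B (anc s a) \<longrightarrow> x \<in> B (anc s b) \<longrightarrow> x \<in> B (anc s k)"
  proof (intro allI impI)
    fix x a b k
    assume h: "b \<le> k" "k \<le> a" "a \<le> Lv s" "x \<in> B (anc s a)" "x \<in> B (anc s b)"
    show "x \<in> B (anc s k)" using convex[OF s h(1) h(2) h(3) cn h(4) h(5)] .
  qed
  obtain ys where ys: "(bypass_step (GG lam ?f))\<^sup>*\<^sup>* (rev [l..<Suc (Lv s)]) ys"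
    and cases: "(lam dvd l \<and> ys = [Lv s, l]) \<or>
     (\<not> lam dvd l \<and> ((ys = [Lv s, l] \<and> GG lam ?f l \<subseteq> GG lam ?f (Lv s)) \<or> (\<exists>a. a < Lv s \<and> ys = [Lv s, a, l] \<and> GG lam ?f l \<subseteq> GG lam ?f a)))"
    using side[where f="\<lambda>j. B (anc s j)" and L="Lv s", OF lam cv l] by blast
  have agree: "\<forall>k\<in>set (rev [l..<Suc (Lv s)]). GG lam ?f k = ?B' (anc s k)"
  proof
    fix k assume "k \<in> set (rev [l..<Suc (Lv s)])"
    then have "k \<le> Lv s" by (simp add: less_Suc_eq_le)
    then show "GG lam ?f k = ?B' (anc s k)" using nb_formula[OF s _ lam, of k B] by simp
  qed
  have "(bypass_step (\<lambda>k. ?B' (anc s k)))\<^sup>*\<^sup>* (rev [l..<Suc (Lv s)]) ys"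
    by (rule rtc_cong[OF ys agree])
  then have r: "(bypass_step ?B')\<^sup>*\<^sup>* (map (anc s) (rev [l..<Suc (Lv s)])) (map (anc s) ys)"
    by (rule rtc_map[where h="anc s" and B="?B'"])
  have eqs: "\<And>k. k \<le> Lv s \<Longrightarrow> ?B' (anc s k) = GG lam ?f k"
  proof -
    fix k assume "k \<le> Lv s"
    show "?B' (anc s k) = GG lam ?f k" by (rule nb_formula[OF s \<open>k \<le> Lv s\<close> lam])
  qed
  have c2: "ys = [Lv s, l] \<or> (\<exists>a. a < Lv s \<and> ys = [Lv s, a, l] \<and> GG lam ?f l \<subseteq> GG lam ?f a)"
    using cases by blast
  have c3: "lam dvd l \<Longrightarrow> ys = [Lv s, l]" using cases by blast
  show ?thesis
  proof (rule exI[of _ "map (anc s) ys"], intro conjI impI)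
    show "(bypass_step ?B')\<^sup>*\<^sup>* (map (anc s) (rev [l..<Suc (Lv s)])) (map (anc s) ys)" by (rule r)
    show "map (anc s) ys \<noteq> []" "last (map (anc s) ys) = anc s l" "length (map (anc s) ys) \<le> 3"
      using c2 by (elim disjE exE conjE; simp)+
    show "lam dvd l \<Longrightarrow> length (map (anc s) ys) \<le> 2" using c3 by simp
    assume "length (map (anc s) ys) = 3"
    then obtain a where a: "a < Lv s" "ys = [Lv s, a, l]" "GG lam ?f l \<subseteq> GG lam ?f a"
      using c2 by auto
    have "?B' (anc s l) = GG lam ?f l" using eqs[of l] l by simp
    moreover have "?B' (anc s a) = GG lam ?f a" using eqs[of a] a(1) by simp
    ultimately show "?B' (anc s l) \<subseteq> ?B' (map (anc s) ys ! 1)"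
      using a by simp
  qed
qed

lemma main:
  assumes lam: "1 \<le> lam" and cn: "\<And>x. connected_in E {i \<in> N. x \<in> B i}"
    and s: "s \<in> N" and t: "t \<in> N"
  shows "comb_length_le (new_bags N E r lam B) (tpath N E s t) 3"
proof -
  let ?B' = "new_bags N E r lam B"
  define l where "l = lc s t"
  note lp = lc_props[OF s t, folded l_def]
  define c where "c = anc s l"
  have ct: "c = anc t l" unfolding c_def using lp by simp
  define U where "U = map (anc s) (rev [l..<Suc (Lv s)])"
  define D where "D = map (anc t) [Suc l..<Suc (Lv t)]"
  define W where "W = map (anc t) (rev [l..<Suc (Lv t)])"
  have tp: "tpath N E s t = U @ D" unfolding U_def D_def l_def by (rule tpath_st[OF s t])
  have rW: "rev W = c # D" unfolding W_def D_def ct using lp(2)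
    by (simp add: rev_map upt_conv_Cons)
  have sideU: "\<exists>U'. (bypass_step ?B')\<^sup>*\<^sup>* U U' \<and> U' \<noteq> [] \<and> last U' = c \<and> length U' \<le> 3 \<and>
      (lam dvd l \<longrightarrow> length U' \<le> 2) \<and> (length U' = 3 \<longrightarrow> ?B' c \<subseteq> ?B' (U' ! 1))"
  proof (cases "l < Lv s")
    case True
    then show ?thesis using side_node[OF lam cn s True] unfolding U_def c_def by blast
  next
    case False
    then have "U = [c]" unfolding U_def c_def using lp(1) by (simp add: upt_conv_Cons)
    then show ?thesis by (intro exI[of _ U]) auto
  qed
  have sideW: "\<exists>W'. (bypass_step ?B')\<^sup>*\<^sup>* W W' \<and> W' \<noteq> [] \<and> last W' = c \<and> length W' \<le> 3 \<and>
      (lam dvd l \<longrightarrow> length W' \<le> 2)"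
  proof (cases "l < Lv t")
    case True
    then show ?thesis using side_node[OF lam cn t True] unfolding W_def ct by blast
  next
    case False
    then have "W = [c]" unfolding W_def ct using lp(2) by (simp add: upt_conv_Cons)
    then show ?thesis by (intro exI[of _ W]) auto
  qed
  obtain U' where U': "(bypass_step ?B')\<^sup>*\<^sup>* U U'" "U' \<noteq> []" "last U' = c" "length U' \<le> 3"
    "lam dvd l \<longrightarrow> length U' \<le> 2" "length U' = 3 \<longrightarrow> ?B' c \<subseteq> ?B' (U' ! 1)"
    using sideU by blast
  obtain W' where W': "(bypass_step ?B')\<^sup>*\<^sup>* W W'" "W' \<noteq> []" "last W' = c" "length W' \<le> 3"
    "lam dvd l \<longrightarrow> length W' \<le> 2"
    using sideW by blast
  define F where "F = butlast U' @ rev W'"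
  have Ub: "U' = butlast U' @ [c]" using U'(2,3) by (metis append_butlast_last_id)
  have r1: "(bypass_step ?B')\<^sup>*\<^sup>* (U @ D) (U' @ D)" by (rule rtc_append[OF U'(1)])
  have "U' @ D = butlast U' @ rev W" using rW by (subst Ub) simp
  moreover have "(bypass_step ?B')\<^sup>*\<^sup>* (butlast U' @ rev W) F"
    unfolding F_def by (rule rtc_prepend[OF rtc_rev[OF W'(1)]])
  ultimately have rF: "(bypass_step ?B')\<^sup>*\<^sup>* (tpath N E s t) F" using r1 tp by (metis rtranclp_trans)
  have lenF: "length F = length U' - 1 + length W'" unfolding F_def by simp
  show ?thesis
  proof (cases "length F \<le> 4")
    case True
    then show ?thesis unfolding comb_length_le_def using rF by (intro exI[of _ F]) simp
  next
    case False
    then have l3: "length U' = 3" "length W' = 3" using lenF U'(4) W'(4) by auto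
    then obtain x1 x2 x3 where u3: "U' = [x1, x2, x3]" using len3 by blast
    obtain y1 y2 y3 where w3: "W' = [y1, y2, y3]" using len3 l3 by blast
    have x3: "x3 = c" "y3 = c" using u3 w3 U'(3) W'(3) by auto
    have incl: "?B' c \<subseteq> ?B' x2" using U'(6) l3 u3 by simp
    have F5: "F = [x1] @ x2 # c # y2 # [y1]" unfolding F_def u3 w3 x3 by simp
    have "bypass_step ?B' ([x1] @ x2 # c # y2 # [y1]) ([x1] @ x2 # y2 # [y1])"
      by (rule bs_prepend, rule bs3) (use incl in blast)
    then have "(bypass_step ?B')\<^sup>*\<^sup>* (tpath N E s t) ([x1] @ x2 # y2 # [y1])"
      using rF F5 by (metis rtranclp.rtrancl_into_rtrancl)
    then show ?thesis unfolding comb_length_le_def by (intro exI[of _ "[x1] @ x2 # y2 # [y1]"]) simp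
  qed
qed

end

theorem lemma4p3:
  fixes VG :: "'v set" and EG :: "'v \<Rightarrow> 'v \<Rightarrow> bool"
    and N :: "'n set" and E :: "'n \<Rightarrow> 'n \<Rightarrow> bool" and B :: "'n \<Rightarrow> 'v set"
    and r :: 'n and d lam :: nat
  assumes "is_tree_decomposition VG EG N E B"
    and "r \<in> N"
    and "\<forall>v\<in>N. level N E r v \<le> d"
    and "1 \<le> lam" and "lam \<le> d"
  shows "comb_diameter_le N E (new_bags N E r lam B) 3"
proof -
  have tree: "is_tree N E" using assms(1) by (simp add: is_tree_decomposition_def)
  interpret rt N E r by (unfold_locales) (use tree assms(2) in auto)
  have cn: "\<And>x. connected_in E {i \<in> N. x \<in> B i}"
  proof -
    fix x
    show "connected_in E {i \<in> N. x \<in> B i}"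
    proof (cases "x \<in> VG")
      case True then show ?thesis using assms(1) by (simp add: is_tree_decomposition_def)
    next
      case False
      then have e: "{i \<in> N. x \<in> B i} = {}" using assms(1) by (auto simp: is_tree_decomposition_def)
      show ?thesis by (subst e) (simp add: connected_in_def)
    qed
  qed
  show ?thesis unfolding comb_diameter_le_def using main[OF assms(4) cn] by blast
qed


end
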